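(* Let $(A,\Delta)$ be a regular multiplier Hopf algebra acting on an algebra $R$ (so $R$ is a left $A$-module algebra). Let $C$ be an algebra over $\mathbb C$ with non-degenerate product and let $\pi_A:A\to M(C)$ and $\pi_R:R\to M(C)$ be algebra homomorphisms such that $$\pi_A(a)\pi_R(x)=\sum \pi_R(a_{(1)}x)\pi_A(a_{(2)})$$ for all $a\in A$, $x\in R$. Then the linear map $\pi:R\# A\to M(C)$ given by $\pi(x\# a)=\pi_R(x)\pi_A(a)$ is an algebra homomorphism.
   Context: Algebras are over $\mathbb C$, possibly without identity, with non-degenerate product; $M(\cdot)$ is the multiplier algebra. A regular multiplier Hopf algebra is a pair $(A,\Delta)$ with $\Delta:A\to M(A\otimes A)$ a coassociative homomorphism such that $\Delta(a)(1\otimes b),(a\otimes 1)\Delta(b),\Delta(a)(b\otimes 1),(1\otimes a)\Delta(b)\in A\otimes A$, the maps $a\otimes b\mapsto\Delta(a)(1\otimes b)$, $a\otimes b\mapsto(a\otimes 1)\Delta(b)$ are bijective, and likewise for the flipped comultiplication; Sweedler notation is used with legs covered. A left $A$-module algebra is an algebra $R$ with non-degenerate product which is a unital left $A$-module ($AR=R$) with $a(xx')=\sum(a_{(1)}x)(a_{(2)}x')$. For $a\in A$, $x\in R$, the element $\sum a_{(1)}x\otimes a_{(2)}\in R\otimes A$ is well defined ($x$ covers $a_{(1)}$), and $\sum\pi_R(a_{(1)}x)\pi_A(a_{(2)})$ is the image of it under $y\otimes b\mapsto\pi_R(y)\pi_A(b)$. The smash product $R\# A$ is $R\otimes A$ with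 product $(x\# a)(x'\# a')=\sum x(a_{(1)}x')\# a_{(2)}a'$. *)

theory Defs
  imports Complex_Main
begin

section \<open>Algebras over the complex numbers (possibly without identity)\<close>

class calg = ring +
  fixes csc :: "complex \<Rightarrow> 'a \<Rightarrow> 'a"
  assumes csc_add_right: "csc c (x + y) = csc c x + csc c y"
    and csc_add_left: "csc (c + d) x = csc c x + csc d x"
    and csc_csc: "csc c (csc d x) = csc (c * d) x"
    and csc_one: "csc 1 x = x"
    and mult_csc_left: "csc c x * y = csc c (x * y)"
    and mult_csc_right: "x * csc c y = csc c (x * y)"

definition nondeg :: "'x set \<Rightarrow> 'x \<Rightarrow> ('x \<Rightarrow> 'x \<Rightarrow> 'x) \<Rightarrow> bool" where
  "nondeg S z mul \<longleftrightarrow>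
     (\<forall>x\<in>S. (\<forall>y\<in>S. mul x y = z) \<longrightarrow> x = z) \<and> (\<forall>x\<in>S. (\<forall>y\<in>S. mul y x = z) \<longrightarrow> x = z)"

section \<open>Algebraic tensor products (realised inside the dual of the bilinear forms)\<close>

definition bilin :: "('v::calg \<Rightarrow> 'w::calg \<Rightarrow> complex) \<Rightarrow> bool" where
  "bilin \<phi> \<longleftrightarrow>
     (\<forall>v v' w. \<phi> (v + v') w = \<phi> v w + \<phi> v' w) \<and> (\<forall>v w w'. \<phi> v (w + w') = \<phi> v w + \<phi> v w') \<and>
     (\<forall>c v w. \<phi> (csc c v) w = c * \<phi> v w) \<and> (\<forall>c v w. \<phi> v (csc c w) = c * \<phi> v w)"

definition trilin :: "('u::calg \<Rightarrow> 'v::calg \<Rightarrow> 'w::calg \<Rightarrow> complex) \<Rightarrow> bool" where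
  "trilin \<chi> \<longleftrightarrow> (\<forall>u. bilin (\<chi> u)) \<and> (\<forall>w. bilin (\<lambda>u v. \<chi> u v w))"

type_synonym ('v, 'w) tf = "('v \<Rightarrow> 'w \<Rightarrow> complex) \<Rightarrow> complex"

text \<open>The element \<open>\<Sum> v_i \<otimes> w_i\<close> of V\<otimes>W, seen as the functional \<open>\<phi> \<mapsto> \<Sum> \<phi> v_i w_i\<close>
  on bilinear forms (bilinear forms separate the points of V\<otimes>W).\<close>
definition tens :: "('v::calg \<times> 'w::calg) list \<Rightarrow> ('v, 'w) tf" where
  "tens xs = (\<lambda>\<phi>. if bilin \<phi> then sum_list (map (\<lambda>(v, w). \<phi> v w) xs) else 0)"

definition tensors :: "('v::calg, 'w::calg) tf set" where
  "tensors = range tens"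

definition tp :: "'v::calg \<Rightarrow> 'w::calg \<Rightarrow> ('v, 'w) tf" where
  "tp v w = tens [(v, w)]"

definition tzero :: "('v, 'w) tf" where "tzero = (\<lambda>\<phi>. 0)"
definition tadd :: "('v, 'w) tf \<Rightarrow> ('v, 'w) tf \<Rightarrow> ('v, 'w) tf" where
  "tadd t s = (\<lambda>\<phi>. t \<phi> + s \<phi>)"
definition tsc :: "complex \<Rightarrow> ('v, 'w) tf \<Rightarrow> ('v, 'w) tf" where
  "tsc c t = (\<lambda>\<phi>. c * t \<phi>)"

text \<open>Product of the tensor product algebra: \<open>(a\<otimes>b)(c\<otimes>d) = ac\<otimes>bd\<close>.\<close>
definition tmul :: "('a::calg, 'b::calg) tf \<Rightarrow> ('a, 'b) tf \<Rightarrow> ('a, 'b) tf" where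
  "tmul t s = (\<lambda>\<phi>. if bilin \<phi> then t (\<lambda>a b. s (\<lambda>c d. \<phi> (a * c) (b * d))) else 0)"

definition tflip :: "('a::calg, 'b::calg) tf \<Rightarrow> ('b, 'a) tf" where
  "tflip t = (\<lambda>\<phi>. t (\<lambda>x y. \<phi> y x))"

text \<open>Image of a tensor under the linear map induced by a bilinear map \<open>\<beta>\<close>
  into a vector space with zero z and addition add.\<close>
definition tmap :: "'y \<Rightarrow> ('y \<Rightarrow> 'y \<Rightarrow> 'y) \<Rightarrow> ('v::calg \<Rightarrow> 'w::calg \<Rightarrow> 'y) \<Rightarrow> ('v, 'w) tf \<Rightarrow> 'y" where
  "tmap z add \<beta> t = foldr (\<lambda>(v, w) acc. add (\<beta> v w) acc) (SOME xs. tens xs = t) z"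

section \<open>Multiplier algebras (double centralisers)\<close>

type_synonym 'x mltp = "('x \<Rightarrow> 'x) \<times> ('x \<Rightarrow> 'x)"

definition lin_on :: "'x set \<Rightarrow> ('x \<Rightarrow> 'x \<Rightarrow> 'x) \<Rightarrow> (complex \<Rightarrow> 'x \<Rightarrow> 'x) \<Rightarrow> ('x \<Rightarrow> 'x) \<Rightarrow> bool" where
  "lin_on S add sc f \<longleftrightarrow> (\<forall>x\<in>S. \<forall>y\<in>S. f (add x y) = add (f x) (f y)) \<and> (\<forall>c. \<forall>x\<in>S. f (sc c x) = sc c (f x))"

text \<open>A multiplier of the algebra (S, z, add, mul, sc): a pair (L, R) of linear maps of S
  with \<open>x L(y) = R(x) y\<close>; the maps are normalised to z outside S.\<close>
definition is_mult :: "'x set \<Rightarrow> 'x \<Rightarrow> ('x \<Rightarrow> 'x \<Rightarrow> 'x) \<Rightarrow> ('x \<Rightarrow> 'x \<Rightarrow> 'x) \<Rightarrow> (complex \<Rightarrow> 'x \<Rightarrow> 'x) \<Rightarrow> 'x mltp \<Rightarrow> bool" where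
  "is_mult S z add mul sc m \<longleftrightarrow>
     (\<forall>x\<in>S. fst m x \<in> S \<and> snd m x \<in> S) \<and> (\<forall>x. x \<notin> S \<longrightarrow> fst m x = z \<and> snd m x = z) \<and>
     lin_on S add sc (fst m) \<and> lin_on S add sc (snd m) \<and>
     (\<forall>x\<in>S. \<forall>y\<in>S. mul x (fst m y) = mul (snd m x) y)"

definition mmul :: "'x mltp \<Rightarrow> 'x mltp \<Rightarrow> 'x mltp" where
  "mmul m n = (fst m \<circ> fst n, snd n \<circ> snd m)"

definition madd :: "('x \<Rightarrow> 'x \<Rightarrow> 'x) \<Rightarrow> 'x mltp \<Rightarrow> 'x mltp \<Rightarrow> 'x mltp" where
  "madd add m n = (\<lambda>x. add (fst m x) (fst n x), \<lambda>x. add (snd m x) (snd n x))"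

definition msc :: "(complex \<Rightarrow> 'x \<Rightarrow> 'x) \<Rightarrow> complex \<Rightarrow> 'x mltp \<Rightarrow> 'x mltp" where
  "msc sc c m = (\<lambda>x. sc c (fst m x), \<lambda>x. sc c (snd m x))"

definition mzero :: "'x \<Rightarrow> 'x mltp" where
  "mzero z = (\<lambda>x. z, \<lambda>x. z)"

definition memb :: "'x set \<Rightarrow> 'x \<Rightarrow> ('x \<Rightarrow> 'x \<Rightarrow> 'x) \<Rightarrow> 'x \<Rightarrow> 'x mltp" where
  "memb S z mul u = (\<lambda>x. if x \<in> S then mul u x else z, \<lambda>x. if x \<in> S then mul x u else z)"

abbreviation MC :: "'c::calg mltp \<Rightarrow> bool" where
  "MC m \<equiv> is_mult UNIV 0 (+) (*) csc m"
abbreviation MCmul :: "'c::calg mltp \<Rightarrow> 'c mltp \<Rightarrow> 'c mltp" where "MCmul \<equiv> mmul"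
abbreviation MCadd :: "'c::calg mltp \<Rightarrow> 'c mltp \<Rightarrow> 'c mltp" where "MCadd \<equiv> madd (+)"
abbreviation MCsc :: "complex \<Rightarrow> 'c::calg mltp \<Rightarrow> 'c mltp" where "MCsc \<equiv> msc csc"
abbreviation MCzero :: "'c::calg mltp" where "MCzero \<equiv> mzero 0"

definition hom_MC :: "('a::calg \<Rightarrow> 'c::calg mltp) \<Rightarrow> bool" where
  "hom_MC f \<longleftrightarrow> (\<forall>a. MC (f a)) \<and> (\<forall>a b. f (a + b) = MCadd (f a) (f b)) \<and>
     (\<forall>c a. f (csc c a) = MCsc c (f a)) \<and> (\<forall>a b. f (a * b) = MCmul (f a) (f b))"

abbreviation MT :: "('a::calg, 'b::calg) tf mltp \<Rightarrow> bool" where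
  "MT m \<equiv> is_mult tensors tzero tadd tmul tsc m"

abbreviation temb :: "('a::calg, 'b::calg) tf \<Rightarrow> ('a, 'b) tf mltp" where
  "temb u \<equiv> memb tensors tzero tmul u"

definition one_tp :: "'b::calg \<Rightarrow> ('a::calg, 'b) tf mltp" where
  "one_tp b = (\<lambda>t. if t \<in> tensors then (\<lambda>\<phi>. if bilin \<phi> then t (\<lambda>x y. \<phi> x (b * y)) else 0) else tzero,
               \<lambda>t. if t \<in> tensors then (\<lambda>\<phi>. if bilin \<phi> then t (\<lambda>x y. \<phi> x (y * b)) else 0) else tzero)"

definition tp_one :: "'a::calg \<Rightarrow> ('a, 'b::calg) tf mltp" where
  "tp_one a = (\<lambda>t. if t \<in> tensors then (\<lambda>\<phi>. if bilin \<phi> then t (\<lambda>x y. \<phi> (a * x) y) else 0) else tzero,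
               \<lambda>t. if t \<in> tensors then (\<lambda>\<phi>. if bilin \<phi> then t (\<lambda>x y. \<phi> (x * a) y) else 0) else tzero)"

type_synonym 'a comult = "'a \<Rightarrow> ('a, 'a) tf mltp"

definition cov1 :: "'a::calg comult \<Rightarrow> 'a \<Rightarrow> 'a \<Rightarrow> ('a, 'a) tf" where
  "cov1 D a b = (THE u. u \<in> tensors \<and> mmul (D a) (one_tp b) = temb u)"
definition cov2 :: "'a::calg comult \<Rightarrow> 'a \<Rightarrow> 'a \<Rightarrow> ('a, 'a) tf" where
  "cov2 D a b = (THE u. u \<in> tensors \<and> mmul (tp_one a) (D b) = temb u)"
definition cov3 :: "'a::calg comult \<Rightarrow> 'a \<Rightarrow> 'a \<Rightarrow> ('a, 'a) tf" where
  "cov3 D a b = (THE u. u \<in> tensors \<and> mmul (D a) (tp_one b) = temb u)"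

text \<open>The linear maps \<open>a\<otimes>b \<mapsto> \<Delta>(a)(1\<otimes>b)\<close> and \<open>a\<otimes>b \<mapsto> (a\<otimes>1)\<Delta>(b)\<close> on A\<otimes>A.\<close>
definition T1 :: "'a::calg comult \<Rightarrow> ('a, 'a) tf \<Rightarrow> ('a, 'a) tf" where
  "T1 D t = (\<lambda>\<phi>. if bilin \<phi> then t (\<lambda>a b. cov1 D a b \<phi>) else 0)"
definition T2 :: "'a::calg comult \<Rightarrow> ('a, 'a) tf \<Rightarrow> ('a, 'a) tf" where
  "T2 D t = (\<lambda>\<phi>. if bilin \<phi> then t (\<lambda>a b. cov2 D a b \<phi>) else 0)"

definition cop :: "'a::calg comult \<Rightarrow> 'a comult" where
  "cop D a = (\<lambda>t. tflip (fst (D a) (tflip t)), \<lambda>t. tflip (snd (D a) (tflip t)))"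

definition covering_bij :: "'a::calg comult \<Rightarrow> bool" where
  "covering_bij D \<longleftrightarrow>
     (\<forall>a b. \<exists>u\<in>tensors. mmul (D a) (one_tp b) = temb u) \<and>
     (\<forall>a b. \<exists>u\<in>tensors. mmul (tp_one a) (D b) = temb u) \<and>
     (\<forall>a b. \<exists>u\<in>tensors. mmul (D a) (tp_one b) = temb u) \<and>
     (\<forall>a b. \<exists>u\<in>tensors. mmul (one_tp a) (D b) = temb u) \<and>
     bij_betw (T1 D) tensors tensors \<and> bij_betw (T2 D) tensors tensors"

text \<open>Coassociativity in the multiplier sense:
  \<open>(a\<otimes>1\<otimes>1)(\<Delta>\<otimes>\<iota>)(\<Delta>(b)(1\<otimes>c)) = (\<iota>\<otimes>\<Delta>)((a\<otimes>1)\<Delta>(b))(1\<otimes>1\<otimes>c)\<close> in A\<otimes>A\<otimes>A,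
  tested against all trilinear forms.\<close>
definition coassoc :: "'a::calg comult \<Rightarrow> bool" where
  "coassoc D \<longleftrightarrow> (\<forall>a b c \<chi>. trilin \<chi> \<longrightarrow>
      cov1 D b c (\<lambda>p q. cov2 D a p (\<lambda>x y. \<chi> x y q)) =
      cov2 D a b (\<lambda>r s. cov1 D s c (\<lambda>y z. \<chi> r y z)))"

definition regular_mha :: "'a::calg comult \<Rightarrow> bool" where
  "regular_mha D \<longleftrightarrow>
     nondeg (UNIV :: 'a set) 0 (*) \<and>
     (\<forall>a. MT (D a)) \<and>
     (\<forall>a b. D (a + b) = madd tadd (D a) (D b)) \<and> (\<forall>c a. D (csc c a) = msc tsc c (D a)) \<and>
     (\<forall>a b. D (a * b) = mmul (D a) (D b)) \<and>
     coassoc D \<and> covering_bij D \<and> covering_bij (cop D)"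

text \<open>\<open>\<Sum> a_(1) x \<otimes> a_(2) \<in> R\<otimes>A\<close>: write \<open>x = \<Sum> b_j y_j\<close> (possible as AR = R) and take
  \<open>\<Sum>_j (\<triangleright> y_j \<otimes> \<iota>)(\<Delta>(a)(b_j\<otimes>1))\<close>.\<close>
definition sw :: "'a::calg comult \<Rightarrow> ('a \<Rightarrow> 'r::calg \<Rightarrow> 'r) \<Rightarrow> 'a \<Rightarrow> 'r \<Rightarrow> ('r, 'a) tf" where
  "sw D act a x = (\<lambda>\<psi>. if bilin \<psi> then
      sum_list (map (\<lambda>(b, y). cov3 D a b (\<lambda>c d. \<psi> (act c y) d))
        (SOME ds. x = sum_list (map (\<lambda>(b, y). act b y) ds)))
    else 0)"

definition module_algebra :: "'a::calg comult \<Rightarrow> ('a \<Rightarrow> 'r::calg \<Rightarrow> 'r) \<Rightarrow> bool" where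
  "module_algebra D act \<longleftrightarrow>
     nondeg (UNIV :: 'r set) 0 (*) \<and>
     (\<forall>a a' x. act (a + a') x = act a x + act a' x) \<and> (\<forall>a x x'. act a (x + x') = act a x + act a x') \<and>
     (\<forall>c a x. act (csc c a) x = csc c (act a x)) \<and> (\<forall>c a x. act a (csc c x) = csc c (act a x)) \<and>
     (\<forall>a b x. act (a * b) x = act a (act b x)) \<and>
     (\<forall>x. \<exists>ds. x = sum_list (map (\<lambda>(b, y). act b y) ds)) \<and>
     (\<forall>a x x'. act a (x * x') = tmap 0 (+) (\<lambda>y b. y * act b x') (sw D act a x))"

text \<open>Product of the smash product R#A = R\<otimes>A:
  \<open>(x#a)(x'#a') = \<Sum> x(a_(1)x') # a_(2)a'\<close>, extended bilinearly.\<close>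
definition smash_mul :: "'a::calg comult \<Rightarrow> ('a \<Rightarrow> 'r::calg \<Rightarrow> 'r) \<Rightarrow> ('r, 'a) tf \<Rightarrow> ('r, 'a) tf \<Rightarrow> ('r, 'a) tf" where
  "smash_mul D act t s = (\<lambda>\<psi>. if bilin \<psi> then
      t (\<lambda>x a. s (\<lambda>x' a'. sw D act a x' (\<lambda>y b. \<psi> (x * y) (b * a')))) else 0)"

end

theory Submission
  imports Defs
begin


lemma csc_zero[simp]: "csc c (0::'a::calg) = 0"
proof -
  have "csc c 0 + csc c 0 = csc c (0::'a) + 0" using csc_add_right[of c 0 0] by simp
  then show ?thesis by simp
qed
lemma csc_zero_left[simp]: "csc 0 (x::'a::calg) = 0"
proof -
  have "csc 0 x + csc 0 x = csc 0 x + (0::'a)" using csc_add_left[of 0 0 x] by simp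
  then show ?thesis by simp
qed
lemma csc_minus: "csc c (- x::'a::calg) = - csc c x"
proof -
  have "csc c (- x) + csc c x = 0" using csc_add_right[of c "-x" x] by simp
  then show ?thesis by (simp add: eq_neg_iff_add_eq_0)
qed
lemma csc_diff: "csc c (x - y::'a::calg) = csc c x - csc c y"
  by (simp only: diff_conv_add_uminus csc_add_right csc_minus)

interpretation CV: vector_space "csc :: complex \<Rightarrow> 'a::calg \<Rightarrow> 'a"
  by unfold_locales (simp_all add: csc_add_right csc_add_left csc_csc csc_one)

definition lfun :: "('a::calg \<Rightarrow> complex) \<Rightarrow> bool" where
  "lfun l \<longleftrightarrow> (\<forall>x y. l (x + y) = l x + l y) \<and> (\<forall>c x. l (csc c x) = c * l x)"

definition cB :: "'a::calg set" where "cB = CV.extend_basis {}"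
definition crd :: "'a::calg \<Rightarrow> 'a \<Rightarrow> complex" where "crd b v = CV.representation cB v b"

lemma cB_ind: "CV.independent cB"
  unfolding cB_def by (rule CV.independent_extend_basis) (rule CV.independent_empty)
lemma cB_span: "CV.span (cB::'a::calg set) = UNIV"
  unfolding cB_def by (rule CV.span_extend_basis) (rule CV.independent_empty)

lemma lfun_crd: "lfun (crd (b::'a::calg))"
proof -
  have s: "\<And>v::'a. v \<in> CV.span cB" using cB_span by auto
  show ?thesis unfolding lfun_def crd_def
    using CV.representation_add[OF cB_ind s s] CV.representation_scale[OF cB_ind s] by simp
qed

lemma crd_finite: "finite {b. crd b v \<noteq> 0}"
  unfolding crd_def by (rule CV.finite_representation)

lemma crd_sum: "(\<Sum>b | crd b v \<noteq> 0. csc (crd b v) b) = v"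
  unfolding crd_def using CV.sum_nonzero_representation_eq[OF cB_ind] cB_span by auto

lemma crd_sum_super: "finite F \<Longrightarrow> {b. crd b v \<noteq> 0} \<subseteq> F \<Longrightarrow> (\<Sum>b\<in>F. csc (crd b v) b) = v"
proof -
  assume a: "finite F" "{b. crd b v \<noteq> 0} \<subseteq> F"
  have "(\<Sum>b\<in>F. csc (crd b v) b) = (\<Sum>b | crd b v \<noteq> 0. csc (crd b v) b)"
    by (rule sum.mono_neutral_right) (use a in auto)
  then show ?thesis using crd_sum by simp
qed

lemma sep: "(\<And>b. crd b (v::'a::calg) = 0) \<Longrightarrow> v = 0"
  using crd_sum[of v] by simp

lemma sep_lfun: "(\<And>l. lfun l \<Longrightarrow> l (v::'a::calg) = 0) \<Longrightarrow> v = 0"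
  using sep lfun_crd by blast



section \<open>Lists and tensors\<close>

definition ev :: "('v \<times> 'w) list \<Rightarrow> ('v \<Rightarrow> 'w \<Rightarrow> complex) \<Rightarrow> complex" where
  "ev L \<phi> = sum_list (map (\<lambda>(v, w). \<phi> v w) L)"

lemma ev_simps[simp]: "ev [] \<phi> = 0" "ev ((v,w) # L) \<phi> = \<phi> v w + ev L \<phi>"
  "ev (L @ M) \<phi> = ev L \<phi> + ev M \<phi>"
  by (simp_all add: ev_def)

lemma ev_map: "ev (map f L) \<phi> = sum_list (map (\<lambda>x. case f x of (v,w) \<Rightarrow> \<phi> v w) L)"
  by (simp add: ev_def comp_def)

lemma ev_concat: "ev (concat Ls) \<phi> = sum_list (map (\<lambda>L. ev L \<phi>) Ls)"
  by (induct Ls) (simp_all add: ev_def)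

lemma tens_bilin: "bilin \<phi> \<Longrightarrow> tens L \<phi> = ev L \<phi>"
  by (simp add: tens_def ev_def)

lemma tens_eqI: "(\<And>\<phi>. bilin \<phi> \<Longrightarrow> ev L \<phi> = ev M \<phi>) \<Longrightarrow> tens L = tens M"
  by (rule ext) (simp add: tens_def ev_def)

lemma tens_eqD: "tens L = tens M \<Longrightarrow> bilin \<phi> \<Longrightarrow> ev L \<phi> = ev M \<phi>"
  by (metis tens_bilin)

lemma tensorsE: "t \<in> tensors \<Longrightarrow> (\<And>L. t = tens L \<Longrightarrow> P) \<Longrightarrow> P"
  unfolding tensors_def by blast

lemma tens_in[simp]: "tens L \<in> tensors"
  unfolding tensors_def by blast

lemma lfun_zero: "lfun l \<Longrightarrow> l 0 = 0"
  unfolding lfun_def by (metis add_cancel_right_right add_0)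
lemma lfun_add: "lfun l \<Longrightarrow> l (x + y) = l x + l y"
  unfolding lfun_def by blast
lemma lfun_csc: "lfun l \<Longrightarrow> l (csc c x) = c * l x"
  unfolding lfun_def by blast
lemma lfun_sum_list: "lfun l \<Longrightarrow> l (sum_list (map g L)) = sum_list (map (\<lambda>x. l (g x)) L)"
  by (induct L) (simp_all add: lfun_zero lfun_add)

lemma bilinD:
  assumes "bilin \<phi>"
  shows "\<phi> (v + v') w = \<phi> v w + \<phi> v' w" "\<phi> v (w + w') = \<phi> v w + \<phi> v w'"
    "\<phi> (csc c v) w = c * \<phi> v w" "\<phi> v (csc c w) = c * \<phi> v w"
  using assms unfolding bilin_def by blast+

lemma bilin_zero: assumes "bilin \<phi>" shows "\<phi> 0 w = 0" "\<phi> v 0 = 0"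
  using bilinD(1)[OF assms, of 0 0 w] bilinD(2)[OF assms, of v 0 0] by simp_all

lemma bilin_sum_list1: "bilin \<phi> \<Longrightarrow> \<phi> (sum_list (map g L)) w = sum_list (map (\<lambda>x. \<phi> (g x) w) L)"
  by (induct L) (simp_all add: bilin_zero bilinD)

lemma bilin_sum2: assumes b: "bilin \<phi>" and f: "finite F" shows "\<phi> v (sum g F) = sum (\<lambda>x. \<phi> v (g x)) F"
  using f by (induct F rule: finite_induct) (simp_all add: bilin_zero[OF b] bilinD[OF b])

lemma bilin_prod: "lfun \<rho> \<Longrightarrow> lfun \<omega> \<Longrightarrow> bilin (\<lambda>v w. \<rho> v * \<omega> w)"
  unfolding bilin_def by (simp add: lfun_add lfun_csc algebra_simps)

lemma sum_list_sum_swap: "finite F \<Longrightarrow> sum_list (map (\<lambda>x. sum (f x) F) L) = sum (\<lambda>b. sum_list (map (\<lambda>x. f x b) L)) F"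
  by (induct L) (simp_all add: sum.distrib)

lemma key:
  fixes L :: "('v::calg \<times> 'w::calg) list"
  assumes h: "\<And>\<rho> \<omega>. lfun \<rho> \<Longrightarrow> lfun \<omega> \<Longrightarrow> ev L (\<lambda>v w. \<rho> v * \<omega> w) = 0"
    and b: "bilin \<phi>"
  shows "ev L \<phi> = 0"
proof -
  define F where "F = (\<Union>p\<in>set L. {b. crd b (snd p) \<noteq> 0})"
  have fin: "finite F" unfolding F_def using crd_finite by auto
  have e: "\<phi> v w = (\<Sum>b\<in>F. \<phi> (csc (crd b w) v) b)" if "(v, w) \<in> set L" for v w
  proof -
    have "{b. crd b w \<noteq> 0} \<subseteq> F" unfolding F_def using that by force
    then have "w = (\<Sum>b\<in>F. csc (crd b w) b)" using crd_sum_super fin by metis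
    then have "\<phi> v w = \<phi> v (\<Sum>b\<in>F. csc (crd b w) b)" by simp
    also have "\<dots> = (\<Sum>b\<in>F. \<phi> (csc (crd b w) v) b)"
      by (simp add: bilin_sum2[OF b fin] bilinD[OF b])
    finally show ?thesis .
  qed
  define z where "z b = sum_list (map (\<lambda>(v, w). csc (crd b w) v) L)" for b
  have z0: "z b = 0" for b
  proof (rule sep_lfun)
    fix \<rho> :: "'v \<Rightarrow> complex" assume l: "lfun \<rho>"
    have "\<rho> (z b) = sum_list (map (\<lambda>x. \<rho> (case x of (v, w) \<Rightarrow> csc (crd b w) v)) L)"
      unfolding z_def by (rule lfun_sum_list[OF l])
    also have "\<dots> = ev L (\<lambda>v w. \<rho> v * crd b w)"
      unfolding ev_def by (rule arg_cong[where f=sum_list], rule map_cong) (auto simp: lfun_csc[OF l])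
    also have "\<dots> = 0" using h[OF l lfun_crd] .
    finally show "\<rho> (z b) = 0" .
  qed
  have "ev L \<phi> = sum_list (map (\<lambda>p. \<Sum>b\<in>F. \<phi> (csc (crd b (snd p)) (fst p)) b) L)"
    unfolding ev_def by (rule arg_cong[where f=sum_list], rule map_cong) (auto simp: e)
  also have "\<dots> = (\<Sum>b\<in>F. sum_list (map (\<lambda>p. \<phi> (csc (crd b (snd p)) (fst p)) b) L))"
    by (rule sum_list_sum_swap[OF fin])
  also have "\<dots> = (\<Sum>b\<in>F. \<phi> (z b) b)"
  proof (rule sum.cong[OF refl])
    fix b
    have "\<phi> (z b) b = sum_list (map (\<lambda>p. \<phi> (case p of (v, w) \<Rightarrow> csc (crd b w) v) b) L)"
      unfolding z_def by (rule bilin_sum_list1[OF b])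
    then show "sum_list (map (\<lambda>p. \<phi> (csc (crd b (snd p)) (fst p)) b) L) = \<phi> (z b) b"
      by (simp add: case_prod_beta)
  qed
  also have "\<dots> = 0" by (simp add: z0 bilin_zero[OF b])
  finally show ?thesis .
qed




lemma sum_list_mult_right: "(sum_list (map g L) :: 'a::ring) * d = sum_list (map (\<lambda>x. g x * d) L)"
  by (induct L) (simp_all add: distrib_right)

lemma csc_sum_list: "csc c (sum_list (map g L) :: 'a::calg) = sum_list (map (\<lambda>x. csc c (g x)) L)"
  by (induct L) (simp_all add: csc_add_right)

lemma sum_list_mult_const_c: "(c::complex) * sum_list (map g L) = sum_list (map (\<lambda>x. c * g x) L)"
  by (induct L) (simp_all add: distrib_left)

lemma nondegD: "nondeg (UNIV::'a::calg set) 0 (*) \<Longrightarrow> (\<And>y. (x::'a) * y = 0) \<Longrightarrow> x = 0"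
  unfolding nondeg_def by blast

lemma nd_core:
  fixes g :: "'x \<Rightarrow> 'a::calg"
  assumes nd: "nondeg (UNIV::'a set) 0 (*)"
    and h: "\<And>d \<omega>. lfun \<omega> \<Longrightarrow> sum_list (map (\<lambda>x. f x * \<omega> (g x * d)) L) = 0"
    and l: "lfun \<omega>"
  shows "sum_list (map (\<lambda>x. f x * \<omega> (g x)) L) = 0"
proof -
  define z where "z = sum_list (map (\<lambda>x. csc (f x) (g x)) L)"
  have "z * d = 0" for d
  proof (rule sep_lfun)
    fix \<omega>' :: "'a \<Rightarrow> complex" assume l': "lfun \<omega>'"
    have "z * d = sum_list (map (\<lambda>x. csc (f x) (g x * d)) L)"
      unfolding z_def sum_list_mult_right by (simp add: mult_csc_left)
    then have "\<omega>' (z * d) = sum_list (map (\<lambda>x. f x * \<omega>' (g x * d)) L)"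
      by (simp add: lfun_sum_list[OF l'] lfun_csc[OF l'])
    then show "\<omega>' (z * d) = 0" using h[OF l'] by simp
  qed
  then have "z = 0" using nondegD[OF nd] by blast
  then have "\<omega> z = 0" using lfun_zero[OF l] by simp
  then show ?thesis unfolding z_def by (simp add: lfun_sum_list[OF l] lfun_csc[OF l])
qed

lemma ev_prod_eq: "ev L (\<lambda>v w. f v w) = sum_list (map (\<lambda>x. f (fst x) (snd x)) L)"
  by (induct L) (auto simp: ev_def)

lemma nd_tensor:
  fixes L :: "('a::calg \<times> 'a) list"
  assumes nd: "nondeg (UNIV::'a set) 0 (*)"
    and h: "\<And>c d \<phi>. bilin \<phi> \<Longrightarrow> ev L (\<lambda>p q. \<phi> (p * c) (q * d)) = 0"
    and b: "bilin \<phi>"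
  shows "ev L \<phi> = 0"
proof (rule key[OF _ b])
  fix \<rho> \<omega> :: "'a \<Rightarrow> complex" assume l1: "lfun \<rho>" and l2: "lfun \<omega>"
  have "sum_list (map (\<lambda>x. \<rho> (fst x) * \<omega> (snd x)) L) = 0"
  proof (rule nd_core[OF nd _ l2])
    fix d and \<omega>' :: "'a \<Rightarrow> complex" assume l2': "lfun \<omega>'"
    have "sum_list (map (\<lambda>x. \<omega>' (snd x * d) * \<rho> (fst x)) L) = 0"
    proof (rule nd_core[OF nd _ l1])
      fix c and \<rho>' :: "'a \<Rightarrow> complex" assume l1': "lfun \<rho>'"
      have "ev L (\<lambda>p q. \<rho>' (p * c) * \<omega>' (q * d)) = 0"
        using h[OF bilin_prod[OF l1' l2']] .
      then show "sum_list (map (\<lambda>x. \<omega>' (snd x * d) * \<rho>' (fst x * c)) L) = 0"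
        by (simp add: ev_prod_eq mult.commute)
    qed
    then show "sum_list (map (\<lambda>x. \<rho> (fst x) * \<omega>' (snd x * d)) L) = 0"
      by (simp add: mult.commute)
  qed
  then show "ev L (\<lambda>v w. \<rho> v * \<omega> w) = 0" by (simp add: ev_prod_eq)
qed

section \<open>Tensor operations on lists\<close>

lemma bilin_sum_list: "(\<And>x. x \<in> set M \<Longrightarrow> bilin (H x)) \<Longrightarrow> bilin (\<lambda>a b. sum_list (map (\<lambda>x. H x a b) M))"
proof (induct M)
  case Nil then show ?case by (simp add: bilin_def)
next
  case (Cons x M)
  have b1: "bilin (H x)" using Cons by simp
  have b2: "bilin (\<lambda>a b. sum_list (map (\<lambda>x. H x a b) M))" using Cons by simp
  show ?case using bilinD[OF b1] bilinD[OF b2] unfolding bilin_def by (simp add: algebra_simps)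
qed

lemma bilin_ev: "(\<And>c d. (c, d) \<in> set M \<Longrightarrow> bilin (\<lambda>a b. G a b c d)) \<Longrightarrow> bilin (\<lambda>a b. ev M (G a b))"
  unfolding ev_def by (rule bilin_sum_list) (auto split: prod.splits)

lemma bilin_mult: "bilin \<phi> \<Longrightarrow> bilin (\<lambda>a b. \<phi> (a * c) (b * d))"
  using bilinD unfolding bilin_def by (simp add: distrib_right mult_csc_left)

lemma bilin_mult_left: "bilin \<phi> \<Longrightarrow> bilin (\<lambda>a b. \<phi> (c * a) (d * b))"
  using bilinD unfolding bilin_def by (simp add: distrib_left mult_csc_right)

lemma bilin_neg: "bilin \<phi> \<Longrightarrow> \<phi> (- a) b = - \<phi> a b"
proof -
  assume b: "bilin \<phi>"
  have "\<phi> (a + - a) b = \<phi> a b + \<phi> (- a) b" by (rule bilinD(1)[OF b])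
  then have "\<phi> a b + \<phi> (- a) b = 0" using bilin_zero(1)[OF b, of b] by simp
  then show ?thesis by (simp add: eq_neg_iff_add_eq_0 add.commute)
qed

definition lmul :: "('a::calg \<times> 'b::calg) list \<Rightarrow> ('a \<times> 'b) list \<Rightarrow> ('a \<times> 'b) list" where
  "lmul L M = concat (map (\<lambda>(a, b). map (\<lambda>(c, d). (a * c, b * d)) M) L)"

lemma ev_lmul: "ev (lmul L M) \<phi> = ev L (\<lambda>a b. ev M (\<lambda>c d. \<phi> (a * c) (b * d)))"
  unfolding lmul_def ev_concat by (simp add: ev_def comp_def split_def)

lemma tmul_tens: "tmul (tens L) (tens M) = tens (lmul L M)"
proof (rule ext)
  fix \<phi> :: "'a \<Rightarrow> 'b \<Rightarrow> complex"
  show "tmul (tens L) (tens M) \<phi> = tens (lmul L M) \<phi>"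
  proof (cases "bilin \<phi>")
    case True
    have i: "tens M (\<lambda>c d. \<phi> (a * c) (b * d)) = ev M (\<lambda>c d. \<phi> (a * c) (b * d))" for a b
      by (rule tens_bilin[OF bilin_mult_left[OF True]])
    have o: "bilin (\<lambda>a b. ev M (\<lambda>c d. \<phi> (a * c) (b * d)))"
      by (rule bilin_ev) (rule bilin_mult[OF True])
    show ?thesis using True by (simp add: tmul_def i tens_bilin[OF o] tens_bilin ev_lmul)
  next
    case False then show ?thesis by (simp add: tmul_def tens_def)
  qed
qed

lemma tadd_tens: "tadd (tens L) (tens M) = tens (L @ M)"
  by (rule ext) (simp add: tadd_def tens_def)

definition lsc :: "complex \<Rightarrow> ('a::calg \<times> 'b::calg) list \<Rightarrow> ('a \<times> 'b) list" where
  "lsc c L = map (\<lambda>(a, b). (csc c a, b)) L"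

lemma ev_lsc: "bilin \<phi> \<Longrightarrow> ev (lsc c L) \<phi> = c * ev L \<phi>"
  unfolding lsc_def by (induct L) (auto simp: bilinD distrib_left)

lemma tsc_tens: "tsc c (tens L) = tens (lsc c L)"
  by (rule ext) (simp add: tsc_def tens_def ev_lsc[unfolded ev_def])

lemma fst_one_tp: "fst (one_tp e) (tens L) = tens (map (\<lambda>(x, y). (x, e * y)) L)"
proof -
  have "(\<lambda>\<phi>. if bilin \<phi> then tens L (\<lambda>x y. \<phi> x (e * y)) else 0) = tens (map (\<lambda>(x, y). (x, e * y)) L)"
  proof (rule ext)
    fix \<phi> :: "'a \<Rightarrow> 'b \<Rightarrow> complex"
    show "(if bilin \<phi> then tens L (\<lambda>x y. \<phi> x (e * y)) else 0) = tens (map (\<lambda>(x, y). (x, e * y)) L) \<phi>"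
    proof (cases "bilin \<phi>")
      case True
      have "bilin (\<lambda>x y. \<phi> x (e * y))" using bilinD[OF True] unfolding bilin_def
        by (simp add: distrib_left mult_csc_right)
      then show ?thesis using True by (simp add: tens_bilin ev_def comp_def split_def)
    qed (simp add: tens_def)
  qed
  then show ?thesis by (simp add: one_tp_def)
qed

lemma fst_tp_one: "fst (tp_one b) (tens L) = tens (map (\<lambda>(x, y). (b * x, y)) L)"
proof -
  have "(\<lambda>\<phi>. if bilin \<phi> then tens L (\<lambda>x y. \<phi> (b * x) y) else 0) = tens (map (\<lambda>(x, y). (b * x, y)) L)"
  proof (rule ext)
    fix \<phi> :: "'a \<Rightarrow> 'b \<Rightarrow> complex"
    show "(if bilin \<phi> then tens L (\<lambda>x y. \<phi> (b * x) y) else 0) = tens (map (\<lambda>(x, y). (b * x, y)) L) \<phi>"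
    proof (cases "bilin \<phi>")
      case True
      have "bilin (\<lambda>x y. \<phi> (b * x) y)" using bilinD[OF True] unfolding bilin_def
        by (simp add: distrib_left mult_csc_right)
      then show ?thesis using True by (simp add: tens_bilin ev_def comp_def split_def)
    qed (simp add: tens_def)
  qed
  then show ?thesis by (simp add: tp_one_def)
qed

lemma fst_temb: "fst (temb u) (tens L) = tmul u (tens L)"
  by (simp add: memb_def)

lemma ev_neg: "bilin \<phi> \<Longrightarrow> ev (map (\<lambda>(a, b). (- a, b)) L) \<phi> = - ev L \<phi>"
  by (induct L) (auto simp: bilin_neg)

lemma tens_uniq:
  fixes U U' :: "('a::calg \<times> 'a) list"
  assumes nd: "nondeg (UNIV::'a set) 0 (*)"
    and h: "\<And>c d. tmul (tens U) (tens [(c, d)]) = tmul (tens U') (tens [(c, d)])"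
  shows "tens U = tens U'"
proof (rule tens_eqI)
  fix \<phi> :: "'a \<Rightarrow> 'a \<Rightarrow> complex" assume b: "bilin \<phi>"
  define N where "N = U @ map (\<lambda>(a, b). (- a, b)) U'"
  have "ev N \<phi> = 0"
  proof (rule nd_tensor[OF nd _ b])
    fix c d and \<psi> :: "'a \<Rightarrow> 'a \<Rightarrow> complex" assume b': "bilin \<psi>"
    have "ev (lmul U [(c, d)]) \<psi> = ev (lmul U' [(c, d)]) \<psi>"
      using tens_eqD[OF h[of c d, unfolded tmul_tens] b'] .
    then have e: "ev U (\<lambda>p q. \<psi> (p * c) (q * d)) = ev U' (\<lambda>p q. \<psi> (p * c) (q * d))"
      by (simp add: ev_lmul)
    have "ev (map (\<lambda>(a, b). (- a, b)) U') (\<lambda>p q. \<psi> (p * c) (q * d)) = - ev U' (\<lambda>p q. \<psi> (p * c) (q * d))"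
      by (induct U') (auto simp: bilin_neg[OF b'])
    then show "ev N (\<lambda>p q. \<psi> (p * c) (q * d)) = 0" unfolding N_def using e by simp
  qed
  then show "ev U \<phi> = ev U' \<phi>" unfolding N_def using ev_neg[OF b, of U'] by simp
qed




lemma ev_map2: "ev (map (\<lambda>(p, q). (f p q, g p q)) U) \<chi> = ev U (\<lambda>p q. \<chi> (f p q) (g p q))"
  by (induct U) auto

lemma ev_uminus: "ev L (\<lambda>p q. - f p q) = - ev L f"
  by (induct L) auto

lemma ev_cmult: "ev L (\<lambda>p q. c * f p q) = c * ev L f"
  by (induct L) (auto simp: distrib_left)

lemma ev_add_fun: "ev L (\<lambda>p q. f p q + g p q) = ev L f + ev L g"
  by (induct L) auto

lemma sum_list_swap2: fixes f :: "'x \<Rightarrow> 'y \<Rightarrow> complex" shows "sum_list (map (\<lambda>x. sum_list (map (\<lambda>y. f x y) M)) L) = sum_list (map (\<lambda>y. sum_list (map (\<lambda>x. f x y) L)) M)"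
proof (induct L)
  case (Cons a L)
  have "(\<Sum>y\<leftarrow>M. f a y + (\<Sum>x\<leftarrow>L. f x y)) = (\<Sum>y\<leftarrow>M. f a y) + (\<Sum>y\<leftarrow>M. \<Sum>x\<leftarrow>L. f x y)"
    by (rule sum_list_addf)
  then show ?case using Cons by simp
qed simp

lemma regD:
  fixes D :: "'a::calg comult"
  assumes "regular_mha D"
  shows "nondeg (UNIV::'a::calg set) 0 (*)" "D (a + a') = madd tadd (D a) (D a')"
    "D (csc c a) = msc tsc c (D a)" "covering_bij D"
  using assms unfolding regular_mha_def by blast+

lemma cov_THE:
  fixes M :: "('a::calg, 'a) tf mltp"
  assumes nd: "nondeg (UNIV::'a set) 0 (*)" and ex: "\<exists>u\<in>tensors. M = temb u"
  shows "(THE u. u \<in> tensors \<and> M = temb u) \<in> tensors \<and> M = temb (THE u. u \<in> tensors \<and> M = temb u)"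
proof -
  have ex1: "\<exists>!u. u \<in> tensors \<and> M = temb u"
  proof -
    obtain u where u: "u \<in> tensors" "M = temb u" using ex by blast
    have "u' = u" if u': "u' \<in> tensors" "M = temb u'" for u'
    proof -
      obtain U where U: "u = tens U" using u(1) by (rule tensorsE)
      obtain U' where U': "u' = tens U'" using u'(1) by (rule tensorsE)
      have e: "fst (temb u) (tens L) = fst (temb u') (tens L)" for L using u(2) u'(2) by simp
      have "tens U' = tens U"
        by (rule tens_uniq[OF nd]) (use e[unfolded fst_temb] U U' in simp)
      then show "u' = u" using U U' by simp
    qed
    then show ?thesis using u by blast
  qed
  show ?thesis by (rule theI'[OF ex1])
qed

definition U3 :: "'a::calg comult \<Rightarrow> 'a \<Rightarrow> 'a \<Rightarrow> ('a \<times> 'a) list" where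
  "U3 D a b = (SOME U. cov3 D a b = tens U)"
definition U1 :: "'a::calg comult \<Rightarrow> 'a \<Rightarrow> 'a \<Rightarrow> ('a \<times> 'a) list" where
  "U1 D a b = (SOME U. cov1 D a b = tens U)"

lemma fst_mmul: "fst (mmul m n) = fst m \<circ> fst n"
  by (simp add: mmul_def)

lemma U3_prop:
  assumes r: "regular_mha D"
  shows "fst (D a) (tens (map (\<lambda>(x, y). (b * x, y)) L)) = tmul (tens (U3 D a b)) (tens L)"
proof -
  have ex: "\<exists>u\<in>tensors. mmul (D a) (tp_one b) = temb u"
    using regD(4)[OF r] unfolding covering_bij_def by blast
  have c: "cov3 D a b \<in> tensors \<and> mmul (D a) (tp_one b) = temb (cov3 D a b)"
    unfolding cov3_def using cov_THE[OF regD(1)[OF r] ex] by (simp add: eq_commute)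
  then obtain U where "cov3 D a b = tens U" by (blast elim: tensorsE)
  then have t: "cov3 D a b = tens (U3 D a b)" unfolding U3_def by (metis (mono_tags) someI)
  have "fst (mmul (D a) (tp_one b)) (tens L) = fst (temb (cov3 D a b)) (tens L)" using c by simp
  then show ?thesis by (simp add: fst_mmul fst_tp_one fst_temb t)
qed

lemma U1_prop:
  assumes r: "regular_mha D"
  shows "fst (D a) (tens (map (\<lambda>(x, y). (x, b * y)) L)) = tmul (tens (U1 D a b)) (tens L)"
proof -
  have ex: "\<exists>u\<in>tensors. mmul (D a) (one_tp b) = temb u"
    using regD(4)[OF r] unfolding covering_bij_def by blast
  have c: "cov1 D a b \<in> tensors \<and> mmul (D a) (one_tp b) = temb (cov1 D a b)"
    unfolding cov1_def using cov_THE[OF regD(1)[OF r] ex] by (simp add: eq_commute)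
  then obtain U where "cov1 D a b = tens U" by (blast elim: tensorsE)
  then have t: "cov1 D a b = tens (U1 D a b)" unfolding U1_def by (metis (mono_tags) someI)
  have "fst (mmul (D a) (one_tp b)) (tens L) = fst (temb (cov1 D a b)) (tens L)" using c by simp
  then show ?thesis by (simp add: fst_mmul fst_one_tp fst_temb t)
qed

lemma cov3_U3:
  assumes r: "regular_mha D"
  shows "cov3 D a b = tens (U3 D a b)"
proof -
  have ex: "\<exists>u\<in>tensors. mmul (D a) (tp_one b) = temb u"
    using regD(4)[OF r] unfolding covering_bij_def by blast
  have c: "cov3 D a b \<in> tensors"
    unfolding cov3_def using cov_THE[OF regD(1)[OF r] ex] by (simp add: eq_commute)
  then obtain U where "cov3 D a b = tens U" by (blast elim: tensorsE)
  then show ?thesis unfolding U3_def by (metis (mono_tags) someI)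
qed

lemma relR:
  assumes r: "regular_mha D" and b: "bilin \<phi>"
  shows "ev (U3 D a b) (\<lambda>p q. \<phi> p (q * e)) = ev (U1 D a e) (\<lambda>p q. \<phi> (p * b) q)"
proof -
  note nd = regD(1)[OF r]
  define N where "N = map (\<lambda>(p, q). (p, q * e)) (U3 D a b) @ map (\<lambda>(p, q). (- (p * b), q)) (U1 D a e)"
  have "ev N \<phi> = 0"
  proof (rule nd_tensor[OF nd _ b])
    fix c d and \<psi> :: "'a \<Rightarrow> 'a \<Rightarrow> complex" assume b': "bilin \<psi>"
    have "tmul (tens (U3 D a b)) (tens [(c, e * d)]) = tmul (tens (U1 D a e)) (tens [(b * c, d)])"
      using U3_prop[OF r, of a b "[(c, e * d)]"] U1_prop[OF r, of a e "[(b * c, d)]"] by simp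
    then have "ev (lmul (U3 D a b) [(c, e * d)]) \<psi> = ev (lmul (U1 D a e) [(b * c, d)]) \<psi>"
      unfolding tmul_tens by (rule tens_eqD[OF _ b'])
    then have "ev (U3 D a b) (\<lambda>p q. \<psi> (p * c) (q * (e * d))) = ev (U1 D a e) (\<lambda>p q. \<psi> (p * (b * c)) (q * d))"
      by (simp add: ev_lmul)
    then show "ev N (\<lambda>p q. \<psi> (p * c) (q * d)) = 0"
      unfolding N_def by (simp add: ev_map2 mult.assoc bilin_neg[OF b'] ev_uminus)
  qed
  then show ?thesis unfolding N_def by (simp add: ev_map2 bilin_neg[OF b] ev_uminus)
qed




lemma maD:
  fixes D :: "'a::calg comult" and act :: "'a \<Rightarrow> 'r::calg \<Rightarrow> 'r"
  assumes "module_algebra D act"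
  shows "act (a + a') x = act a x + act a' x" "act a (x + x') = act a x + act a x'"
    "act (csc c a) x = csc c (act a x)" "act a (csc c x) = csc c (act a x)"
    "act (a * b) x = act a (act b x)" "\<exists>ds. x = sum_list (map (\<lambda>(b, y). act b y) ds)"
  using assms unfolding module_algebra_def by blast+

lemma act_zero2:
  fixes D :: "'a::calg comult" and act :: "'a \<Rightarrow> 'r::calg \<Rightarrow> 'r"
  assumes m: "module_algebra D act" shows "act a 0 = 0"
  using maD(2)[OF m, of a 0 0] by simp

lemma act_neg2:
  fixes D :: "'a::calg comult" and act :: "'a \<Rightarrow> 'r::calg \<Rightarrow> 'r"
  assumes m: "module_algebra D act" shows "act a (- x) = - act a x"
proof -
  have "act a (x + - x) = act a x + act a (- x)" by (rule maD(2)[OF m])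
  then have "act a x + act a (- x) = 0" using act_zero2[OF m] by simp
  then show ?thesis by (simp add: eq_neg_iff_add_eq_0 add.commute)
qed

lemma act_sum_list2:
  fixes D :: "'a::calg comult" and act :: "'a \<Rightarrow> 'r::calg \<Rightarrow> 'r"
  assumes m: "module_algebra D act"
  shows "act a (sum_list (map g L)) = sum_list (map (\<lambda>x. act a (g x)) L)"
  by (induct L) (simp_all add: act_zero2[OF m] maD(2)[OF m])

lemma bilin_act:
  fixes D :: "'a::calg comult" and act :: "'a \<Rightarrow> 'r::calg \<Rightarrow> 'r"
  assumes m: "module_algebra D act" and b: "bilin \<psi>"
  shows "bilin (\<lambda>p q. \<psi> (act p y) q)"
  using bilinD[OF b] maD[OF m] unfolding bilin_def by simp

lemma lfun_act:
  fixes D :: "'a::calg comult" and act :: "'a \<Rightarrow> 'r::calg \<Rightarrow> 'r"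
  assumes m: "module_algebra D act" and l: "lfun \<rho>"
  shows "lfun (\<lambda>y. \<rho> (act p y))"
  using l maD[OF m] unfolding lfun_def by simp

lemma ev_zero_fun[simp]: "ev L (\<lambda>p q. 0) = 0"
  by (induct L) auto

lemma sum_list_uminus2: "sum_list (map (\<lambda>x. - f x) L) = - sum_list (map f L :: 'x::ab_group_add list)"
  by (induct L) auto

lemma ev_neg_arg: "bilin \<psi> \<Longrightarrow> ev L (\<lambda>p q. \<psi> (- f p) q) = - ev L (\<lambda>p q. \<psi> (f p) q)"
  by (induct L) (auto simp: bilin_neg)

definition swl :: "'a::calg comult \<Rightarrow> ('a \<Rightarrow> 'r::calg \<Rightarrow> 'r) \<Rightarrow> 'a \<Rightarrow> ('a \<times> 'r) list \<Rightarrow> ('r \<times> 'a) list" where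
  "swl D act a ds = concat (map (\<lambda>(b, y). map (\<lambda>(p, q). (act p y, q)) (U3 D a b)) ds)"

lemma ev_swl: "ev (swl D act a ds) \<psi> = sum_list (map (\<lambda>(b, y). ev (U3 D a b) (\<lambda>p q. \<psi> (act p y) q)) ds)"
  by (induct ds) (auto simp: swl_def ev_map2)

lemma swl_append: "swl D act a (ds @ ds') = swl D act a ds @ swl D act a ds'"
  by (simp add: swl_def)

lemma sw_SOME:
  fixes D :: "'a::calg comult" and act :: "'a \<Rightarrow> 'r::calg \<Rightarrow> 'r"
  assumes r: "regular_mha D" and m: "module_algebra D act"
  shows "sw D act a x = tens (swl D act a (SOME ds. x = sum_list (map (\<lambda>(b, y). act b y) ds)))"
proof (rule ext)
  fix \<psi> :: "'r \<Rightarrow> 'a \<Rightarrow> complex"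
  show "sw D act a x \<psi> = tens (swl D act a (SOME ds. x = sum_list (map (\<lambda>(b, y). act b y) ds))) \<psi>"
  proof (cases "bilin \<psi>")
    case True
    show ?thesis unfolding sw_def tens_bilin[OF True] ev_swl
      using True by (simp add: cov3_U3[OF r] tens_bilin[OF bilin_act[OF m True]] split_def)
  qed (simp add: sw_def tens_def)
qed

lemma wd0:
  fixes D :: "'a::calg comult" and act :: "'a \<Rightarrow> 'r::calg \<Rightarrow> 'r"
  assumes r: "regular_mha D" and m: "module_algebra D act"
    and s: "sum_list (map (\<lambda>(b, y). act b y) ds) = 0" and b: "bilin \<psi>"
  shows "ev (swl D act a ds) \<psi> = 0"
proof (rule key[OF _ b])
  note nd = regD(1)[OF r]
  fix \<rho> :: "'r \<Rightarrow> complex" and \<omega> :: "'a \<Rightarrow> complex" assume l1: "lfun \<rho>" and l2: "lfun \<omega>"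
  have "sum_list (map (\<lambda>x. \<rho> (fst x) * \<omega> (snd x)) (swl D act a ds)) = 0"
  proof (rule nd_core[OF nd _ l2])
    fix e and \<omega>' :: "'a \<Rightarrow> complex" assume l2': "lfun \<omega>'"
    have bb: "bilin (\<lambda>p q. \<rho> (act p y) * \<omega>' q)" for y
      by (rule bilin_act[OF m bilin_prod[OF l1 l2']])
    have "ev (swl D act a ds) (\<lambda>r q. \<rho> r * \<omega>' (q * e))
        = sum_list (map (\<lambda>(b, y). ev (U3 D a b) (\<lambda>p q. \<rho> (act p y) * \<omega>' (q * e))) ds)"
      by (rule ev_swl)
    also have "\<dots> = sum_list (map (\<lambda>(b, y). ev (U1 D a e) (\<lambda>p q. \<rho> (act (p * b) y) * \<omega>' q)) ds)"
      using relR[OF r bb] by (simp add: split_def)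
    also have "\<dots> = sum_list (map (\<lambda>(b, y). ev (U1 D a e) (\<lambda>p q. \<rho> (act p (act b y)) * \<omega>' q)) ds)"
      by (simp add: maD(5)[OF m])
    also have "\<dots> = ev (U1 D a e) (\<lambda>p q. sum_list (map (\<lambda>(b, y). \<rho> (act p (act b y)) * \<omega>' q) ds))"
      unfolding ev_def split_def by (rule sum_list_swap2)
    also have "\<dots> = ev (U1 D a e) (\<lambda>p q. \<rho> (act p (sum_list (map (\<lambda>(b, y). act b y) ds))) * \<omega>' q)"
      by (simp add: act_sum_list2[OF m] lfun_sum_list[OF l1] sum_list_mult_const split_def)
    also have "\<dots> = 0" by (simp add: s act_zero2[OF m] lfun_zero[OF l1])
    finally show "sum_list (map (\<lambda>x. \<rho> (fst x) * \<omega>' (snd x * e)) (swl D act a ds)) = 0"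
      by (simp add: ev_prod_eq)
  qed
  then show "ev (swl D act a ds) (\<lambda>v w. \<rho> v * \<omega> w) = 0" by (simp add: ev_prod_eq)
qed

lemma sw_list:
  fixes D :: "'a::calg comult" and act :: "'a \<Rightarrow> 'r::calg \<Rightarrow> 'r"
  assumes r: "regular_mha D" and m: "module_algebra D act"
    and x: "x = sum_list (map (\<lambda>(b, y). act b y) ds)"
  shows "sw D act a x = tens (swl D act a ds)"
proof -
  define ds0 where "ds0 = (SOME ds. x = sum_list (map (\<lambda>(b, y). act b y) ds))"
  have ds0: "x = sum_list (map (\<lambda>(b, y). act b y) ds0)"
    unfolding ds0_def by (rule someI_ex) (rule maD(6)[OF m])
  have "tens (swl D act a ds0) = tens (swl D act a ds)"
  proof (rule tens_eqI)
    fix \<psi> :: "'r \<Rightarrow> 'a \<Rightarrow> complex" assume b: "bilin \<psi>"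
    define N where "N = ds0 @ map (\<lambda>(b, y). (b, - y)) ds"
    have "sum_list (map (\<lambda>(b, y). act b y) N) = 0"
      unfolding N_def using ds0 x by (simp add: comp_def split_def act_neg2[OF m] sum_list_uminus2)
    then have "ev (swl D act a N) \<psi> = 0" by (rule wd0[OF r m _ b])
    moreover have "ev (swl D act a (map (\<lambda>(b, y). (b, - y)) ds)) \<psi> = - ev (swl D act a ds) \<psi>"
      unfolding ev_swl by (simp add: comp_def split_def act_neg2[OF m] ev_neg_arg[OF b] sum_list_uminus2)
    ultimately show "ev (swl D act a ds0) \<psi> = ev (swl D act a ds) \<psi>"
      unfolding N_def swl_append by simp
  qed
  then show ?thesis unfolding sw_SOME[OF r m] ds0_def .
qed




lemma lsc_lmul: "lmul (lsc c U) M = lsc c (lmul U M)"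
  by (induct U) (auto simp: lmul_def lsc_def comp_def mult_csc_left)

lemma lmul_append: "lmul (U @ U') M = lmul U M @ lmul U' M"
  by (simp add: lmul_def)

lemma U3_add:
  fixes D :: "'a::calg comult"
  assumes r: "regular_mha D" and b: "bilin \<phi>"
  shows "ev (U3 D (a + a') bb) \<phi> = ev (U3 D a bb) \<phi> + ev (U3 D a' bb) \<phi>"
proof -
  have "tens (U3 D (a + a') bb) = tens (U3 D a bb @ U3 D a' bb)"
  proof (rule tens_uniq[OF regD(1)[OF r]])
    fix c d
    have "tmul (tens (U3 D (a + a') bb)) (tens [(c, d)]) = fst (D (a + a')) (tens [(bb * c, d)])"
      using U3_prop[OF r, of "a + a'" bb "[(c, d)]"] by simp
    also have "\<dots> = tadd (fst (D a) (tens [(bb * c, d)])) (fst (D a') (tens [(bb * c, d)]))"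
      by (simp add: regD(2)[OF r] madd_def)
    also have "\<dots> = tadd (tmul (tens (U3 D a bb)) (tens [(c, d)])) (tmul (tens (U3 D a' bb)) (tens [(c, d)]))"
      using U3_prop[OF r, of a bb "[(c, d)]"] U3_prop[OF r, of a' bb "[(c, d)]"] by simp
    also have "\<dots> = tmul (tens (U3 D a bb @ U3 D a' bb)) (tens [(c, d)])"
      by (simp add: tmul_tens tadd_tens lmul_append)
    finally show "tmul (tens (U3 D (a + a') bb)) (tens [(c, d)]) = tmul (tens (U3 D a bb @ U3 D a' bb)) (tens [(c, d)])" .
  qed
  from tens_eqD[OF this b] show ?thesis by simp
qed

lemma U3_csc:
  fixes D :: "'a::calg comult"
  assumes r: "regular_mha D" and b: "bilin \<phi>"
  shows "ev (U3 D (csc k a) bb) \<phi> = k * ev (U3 D a bb) \<phi>"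
proof -
  have "tens (U3 D (csc k a) bb) = tens (lsc k (U3 D a bb))"
  proof (rule tens_uniq[OF regD(1)[OF r]])
    fix c d
    have "tmul (tens (U3 D (csc k a) bb)) (tens [(c, d)]) = fst (D (csc k a)) (tens [(bb * c, d)])"
      using U3_prop[OF r, of "csc k a" bb "[(c, d)]"] by simp
    also have "\<dots> = tsc k (fst (D a) (tens [(bb * c, d)]))"
      by (simp add: regD(3)[OF r] msc_def)
    also have "\<dots> = tsc k (tmul (tens (U3 D a bb)) (tens [(c, d)]))"
      using U3_prop[OF r, of a bb "[(c, d)]"] by simp
    also have "\<dots> = tmul (tens (lsc k (U3 D a bb))) (tens [(c, d)])"
      by (simp add: tmul_tens tsc_tens lsc_lmul)
    finally show "tmul (tens (U3 D (csc k a) bb)) (tens [(c, d)]) = tmul (tens (lsc k (U3 D a bb))) (tens [(c, d)])" .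
  qed
  from tens_eqD[OF this b] show ?thesis by (simp add: ev_lsc[OF b])
qed

context
  fixes D :: "'a::calg comult" and act :: "'a \<Rightarrow> 'r::calg \<Rightarrow> 'r"
  assumes r: "regular_mha D" and m: "module_algebra D act"
begin

lemma sw_add_x: "bilin \<psi> \<Longrightarrow> sw D act a (x + x') \<psi> = sw D act a x \<psi> + sw D act a x' \<psi>"
proof -
  assume b: "bilin \<psi>"
  obtain ds where ds: "x = sum_list (map (\<lambda>(b, y). act b y) ds)" using maD(6)[OF m] by blast
  obtain ds' where ds': "x' = sum_list (map (\<lambda>(b, y). act b y) ds')" using maD(6)[OF m] by blast
  have "x + x' = sum_list (map (\<lambda>(b, y). act b y) (ds @ ds'))" using ds ds' by simp
  then have "sw D act a (x + x') = tens (swl D act a (ds @ ds'))" by (rule sw_list[OF r m])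
  then show ?thesis
    by (simp add: sw_list[OF r m ds] sw_list[OF r m ds'] tens_bilin[OF b] swl_append)
qed

lemma sw_csc_x: "bilin \<psi> \<Longrightarrow> sw D act a (csc k x) \<psi> = k * sw D act a x \<psi>"
proof -
  assume b: "bilin \<psi>"
  obtain ds where ds: "x = sum_list (map (\<lambda>(b, y). act b y) ds)" using maD(6)[OF m] by blast
  have "csc k x = sum_list (map (\<lambda>(b, y). act b y) (map (\<lambda>(b, y). (b, csc k y)) ds))"
    using ds by (simp add: csc_sum_list comp_def split_def maD(4)[OF m])
  then have "sw D act a (csc k x) = tens (swl D act a (map (\<lambda>(b, y). (b, csc k y)) ds))"
    by (rule sw_list[OF r m])
  then have "sw D act a (csc k x) \<psi> = ev (swl D act a (map (\<lambda>(b, y). (b, csc k y)) ds)) \<psi>"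
    by (simp add: tens_bilin[OF b])
  also have "\<dots> = k * ev (swl D act a ds) \<psi>"
  proof -
    have e: "ev (U3 D a bb) (\<lambda>p q. \<psi> (act p (csc k y)) q) = k * ev (U3 D a bb) (\<lambda>p q. \<psi> (act p y) q)" for bb y
      by (simp add: maD(4)[OF m] bilinD(3)[OF b] ev_cmult)
    show ?thesis unfolding ev_swl by (simp add: comp_def split_def e sum_list_const_mult)
  qed
  finally show ?thesis by (simp add: sw_list[OF r m ds] tens_bilin[OF b])
qed

lemma sw_add_a: "bilin \<psi> \<Longrightarrow> sw D act (a + a') x \<psi> = sw D act a x \<psi> + sw D act a' x \<psi>"
proof -
  assume b: "bilin \<psi>"
  obtain ds where ds: "x = sum_list (map (\<lambda>(b, y). act b y) ds)" using maD(6)[OF m] by blast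
  have e: "ev (U3 D (a + a') bb) (\<lambda>p q. \<psi> (act p y) q) = ev (U3 D a bb) (\<lambda>p q. \<psi> (act p y) q) + ev (U3 D a' bb) (\<lambda>p q. \<psi> (act p y) q)" for bb y
    by (rule U3_add[OF r bilin_act[OF m b]])
  show ?thesis
    by (simp add: sw_list[OF r m ds] tens_bilin[OF b] ev_swl split_def e sum_list_addf)
qed

lemma sw_csc_a: "bilin \<psi> \<Longrightarrow> sw D act (csc k a) x \<psi> = k * sw D act a x \<psi>"
proof -
  assume b: "bilin \<psi>"
  obtain ds where ds: "x = sum_list (map (\<lambda>(b, y). act b y) ds)" using maD(6)[OF m] by blast
  have e: "ev (U3 D (csc k a) bb) (\<lambda>p q. \<psi> (act p y) q) = k * ev (U3 D a bb) (\<lambda>p q. \<psi> (act p y) q)" for bb y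
    by (rule U3_csc[OF r bilin_act[OF m b]])
  show ?thesis
    by (simp add: sw_list[OF r m ds] tens_bilin[OF b] ev_swl split_def e sum_list_const_mult)
qed

lemma sw_tens: "\<exists>L. sw D act a x = tens L"
  using sw_list[OF r m] maD(6)[OF m] by blast

end




lemma sum_list_swap_gen: fixes f :: "'x \<Rightarrow> 'y \<Rightarrow> 'z::comm_monoid_add"
  shows "sum_list (map (\<lambda>x. sum_list (map (\<lambda>y. f x y) M)) L) = sum_list (map (\<lambda>y. sum_list (map (\<lambda>x. f x y) L)) M)"
proof (induct L)
  case (Cons a L)
  have "(\<Sum>y\<leftarrow>M. f a y + (\<Sum>x\<leftarrow>L. f x y)) = (\<Sum>y\<leftarrow>M. f a y) + (\<Sum>y\<leftarrow>M. \<Sum>x\<leftarrow>L. f x y)"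
    by (rule sum_list_addf)
  then show ?case using Cons by simp
qed simp

definition FF :: "('v \<Rightarrow> 'w \<Rightarrow> 'c::calg mltp) \<Rightarrow> ('v \<times> 'w) list \<Rightarrow> 'c mltp" where
  "FF \<beta> xs = foldr (\<lambda>(v, w) acc. madd (+) (\<beta> v w) acc) xs (mzero 0)"

lemma fst_FF: "fst (FF \<beta> xs) c = sum_list (map (\<lambda>(v, w). fst (\<beta> v w) c) xs)"
  by (induct xs) (auto simp: FF_def madd_def mzero_def)

lemma snd_FF: "snd (FF \<beta> xs) c = sum_list (map (\<lambda>(v, w). snd (\<beta> v w) c) xs)"
  by (induct xs) (auto simp: FF_def madd_def mzero_def)

lemma pair_ext: "(\<And>c. fst m c = fst n c) \<Longrightarrow> (\<And>c. snd m c = snd n c) \<Longrightarrow> m = n"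
  by (simp add: prod_eq_iff fun_eq_iff)

definition cbil :: "('v::calg \<Rightarrow> 'w::calg \<Rightarrow> 'c::calg) \<Rightarrow> bool" where
  "cbil f \<longleftrightarrow> (\<forall>v v' w. f (v + v') w = f v w + f v' w) \<and> (\<forall>v w w'. f v (w + w') = f v w + f v w') \<and>
     (\<forall>k v w. f (csc k v) w = csc k (f v w)) \<and> (\<forall>k v w. f v (csc k w) = csc k (f v w))"

lemma cbil_bilin: "cbil f \<Longrightarrow> lfun l \<Longrightarrow> bilin (\<lambda>v w. l (f v w))"
  unfolding cbil_def bilin_def by (simp add: lfun_add lfun_csc)

lemma cbil_sum_eq:
  assumes f: "cbil f" and t: "tens xs = tens ys"
  shows "sum_list (map (\<lambda>(v, w). f v w) xs) = sum_list (map (\<lambda>(v, w). f v w) ys)"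
proof -
  have "sum_list (map (\<lambda>(v, w). f v w) xs) - sum_list (map (\<lambda>(v, w). f v w) ys) = 0"
  proof (rule sep_lfun)
    fix l :: "'c \<Rightarrow> complex" assume l: "lfun l"
    have ld: "l (a - b) = l a - l b" for a b
      using lfun_add[OF l, of "a - b" b] by simp
    have "l (sum_list (map (\<lambda>(v, w). f v w) xs)) = ev xs (\<lambda>v w. l (f v w))"
      by (simp add: lfun_sum_list[OF l] ev_def split_def)
    moreover have "l (sum_list (map (\<lambda>(v, w). f v w) ys)) = ev ys (\<lambda>v w. l (f v w))"
      by (simp add: lfun_sum_list[OF l] ev_def split_def)
    moreover have "ev xs (\<lambda>v w. l (f v w)) = ev ys (\<lambda>v w. l (f v w))"
      by (rule tens_eqD[OF t cbil_bilin[OF f l]])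
    ultimately show "l (sum_list (map (\<lambda>(v, w). f v w) xs) - sum_list (map (\<lambda>(v, w). f v w) ys)) = 0"
      by (simp add: ld)
  qed
  then show ?thesis by simp
qed

lemma tmap_tens:
  fixes \<beta> :: "'v::calg \<Rightarrow> 'w::calg \<Rightarrow> 'c::calg mltp"
  assumes f1: "\<And>c. cbil (\<lambda>v w. fst (\<beta> v w) c)" and f2: "\<And>c. cbil (\<lambda>v w. snd (\<beta> v w) c)"
  shows "tmap MCzero MCadd \<beta> (tens xs) = FF \<beta> xs"
proof -
  define ys where "ys = (SOME ys. tens ys = tens xs)"
  have ys: "tens ys = tens xs" unfolding ys_def by (rule someI_ex) blast
  have "FF \<beta> ys = FF \<beta> xs"
  proof (rule pair_ext)
    fix c
    show "fst (FF \<beta> ys) c = fst (FF \<beta> xs) c" unfolding fst_FF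
      using cbil_sum_eq[OF f1 ys] by simp
    show "snd (FF \<beta> ys) c = snd (FF \<beta> xs) c" unfolding snd_FF
      using cbil_sum_eq[OF f2 ys] by simp
  qed
  then show ?thesis unfolding tmap_def FF_def ys_def .
qed

definition addf :: "('c::calg \<Rightarrow> 'c) \<Rightarrow> bool" where
  "addf f \<longleftrightarrow> (\<forall>x y. f (x + y) = f x + f y) \<and> (\<forall>k x. f (csc k x) = csc k (f x))"

lemma addf_zero: "addf f \<Longrightarrow> f 0 = 0"
  unfolding addf_def by (metis add_cancel_right_right add_0)

lemma addf_sum_list: "addf f \<Longrightarrow> f (sum_list (map g L)) = sum_list (map (\<lambda>x. f (g x)) L)"
  by (induct L) (simp_all add: addf_zero, simp add: addf_def)

lemma MC_addf: assumes "MC m" shows "addf (fst m)" "addf (snd m)"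
  using assms unfolding is_mult_def lin_on_def addf_def by auto

lemma homD:
  assumes "hom_MC f"
  shows "MC (f a)" "f (a + b) = madd (+) (f a) (f b)" "f (csc k a) = msc csc k (f a)" "f (a * b) = mmul (f a) (f b)"
  using assms unfolding hom_MC_def by blast+




lemma ev_concat_map: "ev (concat (map (\<lambda>(p, q). H p q) M)) \<psi> = ev M (\<lambda>p q. ev (H p q) \<psi>)"
  by (induct M) auto

lemma FF_append: "fst (FF \<beta> (L @ M)) c = fst (FF \<beta> L) c + fst (FF \<beta> M) c"
  "snd (FF \<beta> (L @ M)) c = snd (FF \<beta> L) c + snd (FF \<beta> M) c"
  by (simp_all add: fst_FF snd_FF)

lemma FF_concat_map:
  "fst (FF \<beta> (concat (map (\<lambda>(p, q). H p q) M))) c = sum_list (map (\<lambda>(p, q). fst (FF \<beta> (H p q)) c) M)"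
  "snd (FF \<beta> (concat (map (\<lambda>(p, q). H p q) M))) c = sum_list (map (\<lambda>(p, q). snd (FF \<beta> (H p q)) c) M)"
  by (induct M) (auto simp: FF_append, auto simp: FF_def mzero_def)

lemma bilin_mix: "bilin \<psi> \<Longrightarrow> bilin (\<lambda>y b. \<psi> (x * y) (b * a'))"
  using bilinD unfolding bilin_def by (simp add: distrib_left distrib_right mult_csc_left mult_csc_right)

context
  fixes D :: "'a::calg comult" and act :: "'a \<Rightarrow> 'r::calg \<Rightarrow> 'r"
    and piA :: "'a \<Rightarrow> 'c::calg mltp" and piR :: "'r \<Rightarrow> 'c mltp"
  assumes r: "regular_mha D" and m: "module_algebra D act"
    and hA: "hom_MC piA" and hR: "hom_MC piR"
begin

definition SL :: "'a \<Rightarrow> 'r \<Rightarrow> ('r \<times> 'a) list" where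
  "SL a x = (SOME K. sw D act a x = tens K)"

lemma SL: "sw D act a x = tens (SL a x)"
  unfolding SL_def using sw_tens[OF r m] by (rule someI_ex)

lemma sw_ev: "bilin \<phi> \<Longrightarrow> sw D act a x \<phi> = ev (SL a x) \<phi>"
  by (simp add: SL tens_bilin)

definition ZZ :: "('r \<times> 'a) list \<Rightarrow> ('r \<times> 'a) list \<Rightarrow> ('r \<times> 'a) list" where
  "ZZ L M = concat (map (\<lambda>(x, a). concat (map (\<lambda>(x', a'). map (\<lambda>(y, b). (x * y, b * a')) (SL a x')) M)) L)"

lemma smash_tens: "smash_mul D act (tens L) (tens M) = tens (ZZ L M)"
proof (rule ext)
  fix \<psi> :: "'r \<Rightarrow> 'a \<Rightarrow> complex"
  show "smash_mul D act (tens L) (tens M) \<psi> = tens (ZZ L M) \<psi>"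
  proof (cases "bilin \<psi>")
    case False then show ?thesis by (simp add: smash_mul_def tens_def)
  next
    case b: True
    have bG: "bilin (\<lambda>x' a'. sw D act a x' (\<lambda>y b. \<psi> (x * y) (b * a')))" for x a
      unfolding bilin_def
    proof (intro conjI allI)
      fix v v' w show "sw D act a (v + v') (\<lambda>y b. \<psi> (x * y) (b * w)) = sw D act a v (\<lambda>y b. \<psi> (x * y) (b * w)) + sw D act a v' (\<lambda>y b. \<psi> (x * y) (b * w))"
        by (rule sw_add_x[OF r m bilin_mix[OF b]])
    next
      fix v w w' show "sw D act a v (\<lambda>y b. \<psi> (x * y) (b * (w + w'))) = sw D act a v (\<lambda>y b. \<psi> (x * y) (b * w)) + sw D act a v (\<lambda>y b. \<psi> (x * y) (b * w'))"
        by (simp only: sw_ev[OF bilin_mix[OF b]]) (simp add: distrib_left bilinD[OF b] ev_add_fun)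
    next
      fix k v w show "sw D act a (csc k v) (\<lambda>y b. \<psi> (x * y) (b * w)) = k * sw D act a v (\<lambda>y b. \<psi> (x * y) (b * w))"
        by (rule sw_csc_x[OF r m bilin_mix[OF b]])
    next
      fix k v w show "sw D act a v (\<lambda>y b. \<psi> (x * y) (b * csc k w)) = k * sw D act a v (\<lambda>y b. \<psi> (x * y) (b * w))"
        by (simp only: sw_ev[OF bilin_mix[OF b]]) (simp add: mult_csc_right bilinD[OF b] ev_cmult)
    qed
    have bH: "bilin (\<lambda>x a. ev M (\<lambda>x' a'. sw D act a x' (\<lambda>y b. \<psi> (x * y) (b * a'))))"
    proof (rule bilin_ev)
      fix x' a' show "bilin (\<lambda>x a. sw D act a x' (\<lambda>y b. \<psi> (x * y) (b * a')))"
        unfolding bilin_def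
      proof (intro conjI allI)
        fix v v' w show "sw D act w x' (\<lambda>y b. \<psi> ((v + v') * y) (b * a')) = sw D act w x' (\<lambda>y b. \<psi> (v * y) (b * a')) + sw D act w x' (\<lambda>y b. \<psi> (v' * y) (b * a'))"
          by (simp only: sw_ev[OF bilin_mix[OF b]]) (simp add: distrib_right bilinD[OF b] ev_add_fun)
      next
        fix v w w' show "sw D act (w + w') x' (\<lambda>y b. \<psi> (v * y) (b * a')) = sw D act w x' (\<lambda>y b. \<psi> (v * y) (b * a')) + sw D act w' x' (\<lambda>y b. \<psi> (v * y) (b * a'))"
          by (rule sw_add_a[OF r m bilin_mix[OF b]])
      next
        fix k v w show "sw D act w x' (\<lambda>y b. \<psi> (csc k v * y) (b * a')) = k * sw D act w x' (\<lambda>y b. \<psi> (v * y) (b * a'))"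
          by (simp only: sw_ev[OF bilin_mix[OF b]]) (simp add: mult_csc_left bilinD[OF b] ev_cmult)
      next
        fix k v w show "sw D act (csc k w) x' (\<lambda>y b. \<psi> (v * y) (b * a')) = k * sw D act w x' (\<lambda>y b. \<psi> (v * y) (b * a'))"
          by (rule sw_csc_a[OF r m bilin_mix[OF b]])
      qed
    qed
    have "smash_mul D act (tens L) (tens M) \<psi> = ev L (\<lambda>x a. ev M (\<lambda>x' a'. sw D act a x' (\<lambda>y b. \<psi> (x * y) (b * a'))))"
      using b by (simp add: smash_mul_def tens_bilin[OF bG] tens_bilin[OF bH])
    also have "\<dots> = ev L (\<lambda>x a. ev M (\<lambda>x' a'. ev (SL a x') (\<lambda>y b. \<psi> (x * y) (b * a'))))"
      by (simp add: sw_ev bilin_mix[OF b])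
    also have "\<dots> = ev (ZZ L M) \<psi>"
      unfolding ZZ_def by (simp add: ev_concat_map ev_map2)
    finally show ?thesis using b by (simp add: tens_bilin)
  qed
qed


lemma aRf: "addf (fst (piR x))" by (rule MC_addf(1)[OF homD(1)[OF hR]])
lemma aRs: "addf (snd (piR x))" by (rule MC_addf(2)[OF homD(1)[OF hR]])
lemma aAf: "addf (fst (piA x))" by (rule MC_addf(1)[OF homD(1)[OF hA]])
lemma aAs: "addf (snd (piA x))" by (rule MC_addf(2)[OF homD(1)[OF hA]])

lemma cb1: "cbil (\<lambda>v w. fst (mmul (piR v) (piA w)) c)"
  using aRf aAf unfolding cbil_def addf_def
  by (simp add: mmul_def homD(2,3)[OF hR] homD(2,3)[OF hA] madd_def msc_def)

lemma cb2: "cbil (\<lambda>v w. snd (mmul (piR v) (piA w)) c)"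
  using aRs aAs unfolding cbil_def addf_def
  by (simp add: mmul_def homD(2,3)[OF hR] homD(2,3)[OF hA] madd_def msc_def)

lemma tm: "tmap MCzero MCadd (\<lambda>x a. mmul (piR x) (piA a)) (tens xs) = FF (\<lambda>x a. mmul (piR x) (piA a)) xs"
  by (rule tmap_tens[OF cb1 cb2])

lemma fmap: "fst (FF (\<lambda>x a. mmul (piR x) (piA a)) (map (\<lambda>(y, b). (x * y, b * a')) K)) c
   = fst (piR x) (fst (FF (\<lambda>x a. mmul (piR x) (piA a)) K) (fst (piA a') c))"
  by (simp add: fst_FF split_def comp_def homD(4)[OF hR] homD(4)[OF hA] mmul_def addf_sum_list[OF aRf])

lemma smap: "snd (FF (\<lambda>x a. mmul (piR x) (piA a)) (map (\<lambda>(y, b). (x * y, b * a')) K)) c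
   = snd (piA a') (snd (FF (\<lambda>x a. mmul (piR x) (piA a)) K) (snd (piR x) c))"
  by (simp add: snd_FF split_def comp_def homD(4)[OF hR] homD(4)[OF hA] mmul_def addf_sum_list[OF aAs])

lemma part3:
  assumes h6: "\<forall>a x. MCmul (piA a) (piR x) = tmap MCzero MCadd (\<lambda>y b. MCmul (piR y) (piA b)) (sw D act a x)"
  shows "FF (\<lambda>x a. mmul (piR x) (piA a)) (ZZ L M) = mmul (FF (\<lambda>x a. mmul (piR x) (piA a)) L) (FF (\<lambda>x a. mmul (piR x) (piA a)) M)"
proof -
  let ?B = "\<lambda>x a. mmul (piR x) (piA a)"
  have FFSL: "FF ?B (SL a x') = mmul (piA a) (piR x')" for a x'
    using h6 by (simp add: SL tm)
  show ?thesis
  proof (rule pair_ext)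
    fix c
    have "fst (FF ?B (ZZ L M)) c = sum_list (map (\<lambda>(x, a). sum_list (map (\<lambda>(x', a'). fst (piR x) (fst (piA a) (fst (piR x') (fst (piA a') c)))) M)) L)"
      unfolding ZZ_def by (simp only: FF_concat_map fmap FFSL) (simp add: mmul_def)
    also have "\<dots> = fst (mmul (FF ?B L) (FF ?B M)) c"
      by (simp add: mmul_def fst_FF split_def addf_sum_list[OF aRf] addf_sum_list[OF aAf])
    finally show "fst (FF ?B (ZZ L M)) c = fst (mmul (FF ?B L) (FF ?B M)) c" .
  next
    fix c
    have "snd (FF ?B (ZZ L M)) c = sum_list (map (\<lambda>(x, a). sum_list (map (\<lambda>(x', a'). snd (piA a') (snd (piR x') (snd (piA a) (snd (piR x) c)))) M)) L)"
      unfolding ZZ_def by (simp only: FF_concat_map smap FFSL) (simp add: mmul_def)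
    also have "\<dots> = sum_list (map (\<lambda>(x', a'). sum_list (map (\<lambda>(x, a). snd (piA a') (snd (piR x') (snd (piA a) (snd (piR x) c))))  L)) M)"
      unfolding split_def by (rule sum_list_swap_gen)
    also have "\<dots> = snd (mmul (FF ?B L) (FF ?B M)) c"
      by (simp add: mmul_def snd_FF split_def addf_sum_list[OF aRs] addf_sum_list[OF aAs])
    finally show "snd (FF ?B (ZZ L M)) c = snd (mmul (FF ?B L) (FF ?B M)) c" .
  qed
qed

lemma part1: "FF (\<lambda>x a. mmul (piR x) (piA a)) (L @ M) = madd (+) (FF (\<lambda>x a. mmul (piR x) (piA a)) L) (FF (\<lambda>x a. mmul (piR x) (piA a)) M)"
  by (rule pair_ext) (simp_all add: FF_append madd_def)

lemma part2: "FF (\<lambda>x a. mmul (piR x) (piA a)) (lsc k L) = msc csc k (FF (\<lambda>x a. mmul (piR x) (piA a)) L)"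
  by (rule pair_ext) (simp_all add: fst_FF snd_FF lsc_def msc_def split_def comp_def csc_sum_list mmul_def homD(3)[OF hR] aAs[unfolded addf_def])

end


theorem proposition5p10:
  fixes D :: "'a::calg comult" and act :: "'a \<Rightarrow> 'r::calg \<Rightarrow> 'r"
    and piA :: "'a \<Rightarrow> 'c::calg mltp" and piR :: "'r \<Rightarrow> 'c mltp"
  assumes "regular_mha D"
    and "module_algebra D act"
    and "nondeg (UNIV :: 'c set) 0 (*)"
    and "hom_MC piA" and "hom_MC piR"
    and "\<forall>a x. MCmul (piA a) (piR x) = tmap MCzero MCadd (\<lambda>y b. MCmul (piR y) (piA b)) (sw D act a x)"
  shows "(\<forall>t\<in>tensors. \<forall>s\<in>tensors.
            tmap MCzero MCadd (\<lambda>x a. MCmul (piR x) (piA a)) (tadd t s) =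
              MCadd (tmap MCzero MCadd (\<lambda>x a. MCmul (piR x) (piA a)) t) (tmap MCzero MCadd (\<lambda>x a. MCmul (piR x) (piA a)) s)) \<and>
         (\<forall>c. \<forall>t\<in>tensors.
            tmap MCzero MCadd (\<lambda>x a. MCmul (piR x) (piA a)) (tsc c t) =
              MCsc c (tmap MCzero MCadd (\<lambda>x a. MCmul (piR x) (piA a)) t)) \<and>
         (\<forall>t\<in>tensors. \<forall>s\<in>tensors.
            tmap MCzero MCadd (\<lambda>x a. MCmul (piR x) (piA a)) (smash_mul D act t s) =
              MCmul (tmap MCzero MCadd (\<lambda>x a. MCmul (piR x) (piA a)) t)
                    (tmap MCzero MCadd (\<lambda>x a. MCmul (piR x) (piA a)) s))"
  proof -
  note r = assms(1) and m = assms(2) and hA = assms(4) and hR = assms(5) and h6 = assms(6)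
  note tm' = tm[OF r m hA hR]
  show ?thesis
  proof (intro conjI ballI allI)
    fix t s :: "('r, 'a) tf" assume t: "t \<in> tensors" and s: "s \<in> tensors"
    obtain L where L: "t = tens L" using t by (rule tensorsE)
    obtain M where M: "s = tens M" using s by (rule tensorsE)
    show "tmap MCzero MCadd (\<lambda>x a. MCmul (piR x) (piA a)) (tadd t s) =
       MCadd (tmap MCzero MCadd (\<lambda>x a. MCmul (piR x) (piA a)) t) (tmap MCzero MCadd (\<lambda>x a. MCmul (piR x) (piA a)) s)"
      unfolding L M tadd_tens tm' by (rule part1[OF r m hA hR])
  next
    fix c and t :: "('r, 'a) tf" assume t: "t \<in> tensors"
    obtain L where L: "t = tens L" using t by (rule tensorsE)
    show "tmap MCzero MCadd (\<lambda>x a. MCmul (piR x) (piA a)) (tsc c t) =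
       MCsc c (tmap MCzero MCadd (\<lambda>x a. MCmul (piR x) (piA a)) t)"
      unfolding L tsc_tens tm' by (rule part2[OF r m hA hR])
  next
    fix t s :: "('r, 'a) tf" assume t: "t \<in> tensors" and s: "s \<in> tensors"
    obtain L where L: "t = tens L" using t by (rule tensorsE)
    obtain M where M: "s = tens M" using s by (rule tensorsE)
    show "tmap MCzero MCadd (\<lambda>x a. MCmul (piR x) (piA a)) (smash_mul D act t s) =
       MCmul (tmap MCzero MCadd (\<lambda>x a. MCmul (piR x) (piA a)) t) (tmap MCzero MCadd (\<lambda>x a. MCmul (piR x) (piA a)) s)"
      unfolding L M smash_tens[OF r m hA hR] tm' by (rule part3[OF r m hA hR h6])
  qed
qed

end
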